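(* Let $n$ be a positive integer and let $x\neq y$ be integers with $0\le x,y\le n$. If there is a cracked graceful permutation of length $n$ with first element $x$ and last element $y$, then $|x-y|\equiv \lfloor n/2\rfloor \pmod 2$.
   Context: A cracked graceful permutation of length $n$ is an arrangement $(a_1,\dots,a_n)$ of $n$ distinct integers from $\{0,1,\dots,n\}$ such that its absolute differences $|a_{i+1}-a_i|$ ($1\le i\le n-1$) are exactly the integers $\{1,\dots,n-1\}$. *)

theory Defs
  imports Main
begin

definition cracked_graceful :: "nat \<Rightarrow> int list \<Rightarrow> bool" where
  "cracked_graceful n a \<longleftrightarrow>
     length a = n \<and> distinct a \<and> set a \<subseteq> {0..int n} \<and>
     {\<bar>a ! (i+1) - a ! i\<bar> | i. i + 1 < n} = {1..int n - 1}"

end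

theory Submission imports Defs begin

lemma par: "(int m * (int m + 1) div 2) mod 2 = int ((m+1) div 2) mod 2"
proof -
  obtain q r where qr: "m = 4*q + r" "r < 4" by (metis mod_less_divisor div_mod_decomp zero_less_numeral mult.commute)
  have "r = 0 \<or> r = 1 \<or> r = 2 \<or> r = 3" using qr by auto
  then show ?thesis
  proof (elim disjE)
    assume "r = 0"
    define K where "K = int q * (4*int q+1)"
    have "int m * (int m + 1) div 2 = 2 * K" using qr \<open>r=0\<close> unfolding K_def by (simp add: algebra_simps)
    moreover have "(m+1) div 2 = 2*q" using qr \<open>r=0\<close> by simp
    ultimately show ?thesis by simp
  next
    assume "r = 1"
    define K where "K = 4*int q*int q+3*int q"
    have "int m * (int m + 1) div 2 = 2*K+1" using qr \<open>r=1\<close> unfolding K_def by (simp add: algebra_simps)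
    moreover have "(m+1) div 2 = 2*q+1" using qr \<open>r=1\<close> by simp
    ultimately show ?thesis by simp
  next
    assume "r = 2"
    define K where "K = 4*int q*int q+5*int q+1"
    have "int m * (int m + 1) div 2 = 2*K+1" using qr \<open>r=2\<close> unfolding K_def by (simp add: algebra_simps)
    moreover have "(m+1) div 2 = 2*q+1" using qr \<open>r=2\<close> by simp
    ultimately show ?thesis by simp
  next
    assume "r = 3"
    define K where "K = (4*int q+3)*(int q+1)"
    have "int m * (int m + 1) div 2 = 2*K" using qr \<open>r=3\<close> unfolding K_def by (simp add: algebra_simps)
    moreover have "(m+1) div 2 = 2*q+2" using qr \<open>r=3\<close> by simp
    ultimately show ?thesis by simp
  qed
qed
lemma gauss_int: "2 * (\<Sum>i\<in>{1..int k}. i) = int k * (int k + 1)"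
proof (induction k)
  case 0 then show ?case by simp
next
  case (Suc k)
  have "{1..int (Suc k)} = insert (int k + 1) {1..int k}" by auto
  then show ?case using Suc by (simp add: algebra_simps)
qed

theorem lemma5p11:
  fixes n :: nat and x y :: int
  assumes "n > 0" and "x \<noteq> y" and "0 \<le> x" and "x \<le> int n" and "0 \<le> y" and "y \<le> int n"
    and "\<exists>a. cracked_graceful n a \<and> hd a = x \<and> last a = y"
  shows "\<bar>x - y\<bar> mod 2 = int (n div 2) mod 2"
proof -
  obtain a where cg: "cracked_graceful n a" and hx: "hd a = x" and ly: "last a = y" using assms(7) by blast
  define m where "m = n - 1"
  have nm: "n = m + 1" using assms(1) m_def by simp
  have len: "length a = n" and D: "{\<bar>a ! (i+1) - a ! i\<bar> | i. i + 1 < n} = {1..int n - 1}"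
    using cg unfolding cracked_graceful_def by auto
  define f where "f i = \<bar>a ! (i+1) - a ! i\<bar>" for i
  have img: "f ` {..<m} = {1..int m}"
    using D unfolding f_def nm by (auto simp: image_def)
  have "card (f ` {..<m}) = card {..<m}" using img by simp
  then have inj: "inj_on f {..<m}" by (simp add: eq_card_imp_inj_on)
  have "(\<Sum>i<m. f i) = (\<Sum>v\<in>{1..int m}. v)"
    using sum.reindex[OF inj, of "\<lambda>v. v"] img by simp
  then have s1: "2 * (\<Sum>i<m. f i) = int m * (int m + 1)" using gauss_int by simp
  have tel: "(\<Sum>i<m. a ! Suc i - a ! i) = y - x"
  proof -
    have "a \<noteq> []" using len assms(1) by auto
    then have "hd a = a ! 0" "last a = a ! m" using len nm by (auto simp: hd_conv_nth last_conv_nth)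
    then show ?thesis using sum_lessThan_telescope[of "\<lambda>i. a ! i" m] hx ly by simp
  qed
  have "2 dvd ((\<Sum>i<m. f i) - (\<Sum>i<m. a ! Suc i - a ! i))"
    unfolding sum_subtractf[symmetric] f_def
    by (rule dvd_sum) (auto simp: abs_if)
  then have "(\<Sum>i<m. f i) mod 2 = (y - x) mod 2" using tel
    by (metis mod_eq_dvd_iff)
  moreover have "(\<Sum>i<m. f i) = int m * (int m + 1) div 2" using s1 by simp
  moreover have "\<bar>x - y\<bar> mod 2 = (y - x) mod 2"
    by (auto simp: abs_if mod_eq_dvd_iff)
  ultimately show ?thesis using par[of m] nm by simp
qed

end
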